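(* Let $D_\infty=\langle s,t\mid t^2,\ tsts\rangle$, let $\alpha,\beta$ be minimal continuous actions of $D_\infty$ on an infinite compact Hausdorff space $X$ that are continuously orbit equivalent via a homeomorphism $\phi$ with continuous orbit cocycle $c:D_\infty\times X\to D_\infty$ (so $\phi(\alpha_g x)=\beta_{c(g,x)}\phi(x)$), and suppose the restricted action of the subgroup $\langle s\rangle\cong\mathbb{Z}$ under $\alpha$ is minimal. Then there exist a continuous map $L':X\to D_\infty$ and $k\in\mathbb{Z}$ such that $c(g,x)=L'(\alpha_g x)^{-1}\phi_k(g)L'(x)$ for all $g\in D_\infty$, $x\in X$, where $\phi_k$ is the automorphism of $D_\infty$ with $\phi_k(s)=s$, $\phi_k(t)=s^kt$. *)

theory Defs
  imports "HOL-Analysis.Analysis"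
begin

text \<open>The infinite dihedral group D_inf = < s, t | t^2, tsts >.
  Every element has a unique normal form s^n t^e with n an integer and e a boolean
  (e = True meaning one factor t).
  The relations give t s^m = s^(-m) t.\<close>

datatype dinf = D int bool

fun dmul :: "dinf \<Rightarrow> dinf \<Rightarrow> dinf" where
  "dmul (D n e) (D m f) = D (n + (if e then - m else m)) (e \<noteq> f)"

definition dunit :: dinf where "dunit = D 0 False"

fun dinv :: "dinf \<Rightarrow> dinf" where
  "dinv (D n e) = (if e then D n True else D (- n) False)"

definition ds :: dinf where "ds = D 1 False"
definition dt :: dinf where "dt = D 0 True"

text \<open>phi_k: the automorphism with phi_k(s) = s and phi_k(t) = s^k t,
  so phi_k(s^n t^e) = s^n (s^k t)^e.\<close>
fun phik :: "int \<Rightarrow> dinf \<Rightarrow> dinf" where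
  "phik k (D n e) = D (n + (if e then k else 0)) e"

definition sgrp :: "dinf set" where "sgrp = {D n False | n. True}"

definition cont_action :: "(dinf \<Rightarrow> 'x::topological_space \<Rightarrow> 'x) \<Rightarrow> bool" where
  "cont_action a \<longleftrightarrow> (\<forall>x. a dunit x = x) \<and> (\<forall>g h x. a (dmul g h) x = a g (a h x))
     \<and> (\<forall>g. continuous_on UNIV (a g))"

definition minimal_on :: "dinf set \<Rightarrow> (dinf \<Rightarrow> 'x::topological_space \<Rightarrow> 'x) \<Rightarrow> bool" where
  "minimal_on H a \<longleftrightarrow> (\<forall>x. closure {a g x | g. g \<in> H} = UNIV)"

abbreviation minimal_action :: "(dinf \<Rightarrow> 'x::topological_space \<Rightarrow> 'x) \<Rightarrow> bool" where
  "minimal_action a \<equiv> minimal_on UNIV a"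

text \<open>Continuity of a map X \<rightarrow> D_inf (D_inf discrete): all fibres are open.\<close>
definition cont_to_dinf :: "('x::topological_space \<Rightarrow> dinf) \<Rightarrow> bool" where
  "cont_to_dinf f \<longleftrightarrow> (\<forall>h. open {x. f x = h})"

text \<open>Continuity of a map D_inf \<times> X \<rightarrow> D_inf (D_inf discrete, product topology).\<close>
definition cont_cocycle :: "(dinf \<Rightarrow> 'x::topological_space \<Rightarrow> dinf) \<Rightarrow> bool" where
  "cont_cocycle c \<longleftrightarrow> (\<forall>g. cont_to_dinf (c g))"

definition coe_via :: "(dinf \<Rightarrow> 'x::topological_space \<Rightarrow> 'x) \<Rightarrow> (dinf \<Rightarrow> 'x \<Rightarrow> 'x)
    \<Rightarrow> ('x \<Rightarrow> 'x) \<Rightarrow> (dinf \<Rightarrow> 'x \<Rightarrow> dinf) \<Rightarrow> bool" where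
  "coe_via a b \<phi> c \<longleftrightarrow> homeomorphism UNIV UNIV \<phi> (inv \<phi>)
     \<and> cont_cocycle c \<and> (\<forall>g x. \<phi> (a g x) = b (c g x) (\<phi> x))
     \<and> (\<exists>c'. cont_cocycle c' \<and> (\<forall>g y. inv \<phi> (b g y) = a (c' g y) (inv \<phi> y)))"

end

theory Submission
  imports Defs
begin

lemma dmul_assoc: "dmul (dmul a b) c = dmul a (dmul b c)"
  by (cases a; cases b; cases c) auto
lemma dmul_unit_l[simp]: "dmul dunit a = a" by (cases a) (auto simp: dunit_def)
lemma dmul_unit_r[simp]: "dmul a dunit = a" by (cases a) (auto simp: dunit_def)
lemma dinv_l[simp]: "dmul (dinv a) a = dunit" by (cases a) (auto simp: dunit_def)
lemma dinv_r[simp]: "dmul a (dinv a) = dunit" by (cases a) (auto simp: dunit_def)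
lemma dinv_dinv[simp]: "dinv (dinv a) = a" by (cases a) auto

fun lam :: "dinf \<Rightarrow> int \<Rightarrow> int" where
  "lam (D m e) j = (if e then 2*m - 1 - j else j + 2*m)"
fun iota :: "dinf \<Rightarrow> int" where
  "iota (D n e) = (if e then 2*n - 1 else -2*n)"
definition gam :: "int \<Rightarrow> dinf" where
  "gam j = (if even j then D (-(j div 2)) False else D ((j+1) div 2) True)"
fun num :: "dinf \<Rightarrow> int" where "num (D n e) = n"

lemma iota_gam[simp]: "iota (gam j) = j"
  by (auto simp: gam_def elim!: evenE oddE)
lemma gam_iota[simp]: "gam (iota h) = h"
  by (cases h) (auto simp: gam_def)
lemma iota_inj: "iota h = v \<longleftrightarrow> h = gam v" by auto

lemma lam_hom: "lam (dmul a b) = lam a \<circ> lam b"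
  by (cases a; cases b) (auto simp: fun_eq_iff)
lemma lam_unit: "lam dunit = id" by (auto simp: dunit_def fun_eq_iff)
lemma lam_inv_l: "lam (dinv a) \<circ> lam a = id"
  by (metis dinv_l lam_hom lam_unit)
lemma lam_inv_r: "lam a \<circ> lam (dinv a) = id"
  by (metis dinv_r lam_hom lam_unit)

lemma iota_mul_inv: "iota (dmul a (dinv b)) = lam b (iota a)"
  by (cases a; cases b) auto
lemma iota_mul: "iota (dmul h g) = lam (dinv g) (iota h)"
  by (cases h; cases g) auto
lemma iota_step: "\<bar>iota (dmul u v) - iota v\<bar> \<le> 2 * \<bar>num u\<bar> + 1"
  by (cases u; cases v) auto
lemma gam_succ: "gam (j+1) = dmul dt (gam j) \<or> gam (j+1) = dmul (D 1 True) (gam j)"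
  by (auto simp: gam_def dt_def elim!: evenE oddE)
lemma gam0: "gam 0 = dunit" by (simp add: gam_def dunit_def)

definition NN :: "int set" where "NN = {j. 0 \<le> j}"
definition rho :: "int \<Rightarrow> int" where "rho j = -1 - j"
definition tau :: "int \<Rightarrow> int \<Rightarrow> int" where "tau a j = j + a"
definition fequiv :: "int set \<Rightarrow> int set \<Rightarrow> bool" where
  "fequiv U V \<longleftrightarrow> finite (U - V) \<and> finite (V - U)"
definition delta :: "int set \<Rightarrow> int set \<Rightarrow> int" where
  "delta U V = int (card (U - V)) - int (card (V - U))"
definition pos_or :: "(int \<Rightarrow> int) \<Rightarrow> bool" where
  "pos_or P \<longleftrightarrow> fequiv NN (P -` NN)"
definition flux :: "(int \<Rightarrow> int) \<Rightarrow> int" where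
  "flux P = delta NN (P -` NN)"

lemma fequiv_refl: "fequiv U U" by (simp add: fequiv_def)
lemma fequiv_sym: "fequiv U V \<Longrightarrow> fequiv V U" by (simp add: fequiv_def)
lemma fequiv_trans: "fequiv U V \<Longrightarrow> fequiv V W \<Longrightarrow> fequiv U W"
proof -
  assume a: "fequiv U V" "fequiv V W"
  have "U - W \<subseteq> (U - V) \<union> (V - W)" "W - U \<subseteq> (W - V) \<union> (V - U)" by auto
  thus ?thesis using a unfolding fequiv_def by (meson finite_UnI finite_subset)
qed
lemma fequiv_compl: "fequiv U V \<Longrightarrow> fequiv (-U) (-V)"
  unfolding fequiv_def by (simp add: Diff_eq Int_commute)
lemma fequiv_vimage: "inj f \<Longrightarrow> fequiv U V \<Longrightarrow> fequiv (f -` U) (f -` V)"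
  unfolding fequiv_def by (metis finite_vimageI vimage_Diff)

lemma delta_window:
  assumes "finite F" "U - V \<subseteq> F" "V - U \<subseteq> F"
  shows "delta U V = int (card (U \<inter> F)) - int (card (V \<inter> F))"
proof -
  have "U \<inter> F = (U \<inter> V \<inter> F) \<union> (U - V)" using assms by auto
  hence a: "card (U \<inter> F) = card (U \<inter> V \<inter> F) + card (U - V)"
    using assms by (metis (no_types, lifting) Diff_disjoint Int_Diff_disjoint card_Un_disjoint
        finite_Int finite_subset inf_commute inf_left_commute)
  have "V \<inter> F = (U \<inter> V \<inter> F) \<union> (V - U)" using assms by auto
  hence b: "card (V \<inter> F) = card (U \<inter> V \<inter> F) + card (V - U)"
    using assms by (metis (no_types, lifting) Diff_disjoint Int_Diff_disjoint card_Un_disjoint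
        finite_Int finite_subset inf_commute inf_left_commute)
  show ?thesis using a b by (simp add: delta_def)
qed

lemma delta_add:
  assumes "fequiv U V" "fequiv V W"
  shows "delta U W = delta U V + delta V W"
proof -
  have uw: "fequiv U W" using assms fequiv_trans by blast
  define F where "F = (U - V) \<union> (V - U) \<union> (V - W) \<union> (W - V) \<union> (U - W) \<union> (W - U)"
  have fF: "finite F" using assms uw unfolding F_def fequiv_def by auto
  have s: "U - V \<subseteq> F" "V - U \<subseteq> F" "V - W \<subseteq> F" "W - V \<subseteq> F" "U - W \<subseteq> F" "W - U \<subseteq> F"
    unfolding F_def by auto
  show ?thesis
    using delta_window[OF fF s(1,2)] delta_window[OF fF s(3,4)] delta_window[OF fF s(5,6)]
    by simp
qed

lemma delta_vimage: "bij f \<Longrightarrow> delta (f -` U) (f -` V) = delta U V"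
  unfolding delta_def
  by (metis bij_is_inj bij_is_surj card_vimage_inj top_greatest vimage_Diff)

lemma delta_compl: "delta (-U) (-V) = - delta U V"
  unfolding delta_def by (simp add: Diff_eq Int_commute)

lemma bij_tau: "bij (tau a)"
  unfolding tau_def by (rule bij_betw_byWitness[where f'="\<lambda>j. j - a"]) auto
lemma bij_rho: "bij rho"
  unfolding rho_def by (rule bij_betw_byWitness[where f'="\<lambda>j. -1 - j"]) auto
lemma rho_vimage_NN: "rho -` NN = - NN" by (auto simp: rho_def NN_def)
lemma rho_vimage_cNN: "rho -` (- NN) = NN" by (auto simp: rho_def NN_def)
lemma rho_rho: "rho \<circ> rho = id" by (auto simp: rho_def)
lemma tau_rho: "tau a \<circ> rho = rho \<circ> tau (-a)" by (auto simp: rho_def tau_def)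

lemma not_fequiv_NN: "\<not> fequiv NN (-NN)"
proof
  assume "fequiv NN (-NN)"
  hence "finite NN" by (simp add: fequiv_def)
  moreover have "infinite NN"
  proof -
    have "int ` UNIV \<subseteq> NN" by (auto simp: NN_def)
    moreover have "infinite (int ` UNIV)"
      using finite_imageD[of int UNIV] by auto
    ultimately show ?thesis using finite_subset by blast
  qed
  ultimately show False by simp
qed

lemma pos_or_comp:
  assumes "pos_or P" "pos_or Q" "bij Q"
  shows "pos_or (P \<circ> Q) \<and> flux (P \<circ> Q) = flux P + flux Q"
proof -
  have v: "(P \<circ> Q) -` NN = Q -` (P -` NN)" by auto
  have e1: "fequiv (Q -` NN) (Q -` (P -` NN))"
    using fequiv_vimage[OF bij_is_inj[OF assms(3)]] assms(1) unfolding pos_or_def by blast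
  have "fequiv NN (Q -` (P -` NN))" using assms(2) e1 fequiv_trans unfolding pos_or_def by blast
  moreover have "flux (P \<circ> Q) = flux Q + flux P"
    unfolding flux_def v
    using delta_add[of NN "Q -` NN" "Q -` (P -` NN)"] assms(2) e1 delta_vimage[OF assms(3)]
    unfolding pos_or_def by simp
  ultimately show ?thesis unfolding pos_or_def v by simp
qed

lemma tau_pos_or: "pos_or (tau a) \<and> flux (tau a) = - a"
proof -
  have v: "tau a -` NN = {-a..}" by (auto simp: tau_def NN_def)
  have NN: "NN = {0..}" by (auto simp: NN_def)
  show ?thesis
  proof (cases "0 \<le> a")
    case True
    have e1: "{0::int..} - {-a..} = {}" using True by auto
    have e2: "{-a..} - {0::int..} = {-a..<0}" by auto
    show ?thesis using True unfolding pos_or_def flux_def v unfolding NN fequiv_def delta_def e1 e2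
      by simp
  next
    case False
    have e1: "{-a..} - {0::int..} = {}" using False by auto
    have e2: "{0::int..} - {-a..} = {0..<-a}" by auto
    show ?thesis using False unfolding pos_or_def flux_def v unfolding NN fequiv_def delta_def e1 e2
      by simp
  qed
qed

lemma conj_pos_or:
  assumes "pos_or P"
  shows "pos_or (rho \<circ> P \<circ> rho) \<and> flux (rho \<circ> P \<circ> rho) = - flux P"
proof -
  have v: "(rho \<circ> P \<circ> rho) -` NN = rho -` (- (P -` NN))"
    by (auto simp: rho_def NN_def)
  have e: "fequiv (-NN) (- (P -` NN))" using assms fequiv_compl unfolding pos_or_def by blast
  have "fequiv (rho -` (-NN)) (rho -` (- (P -` NN)))"
    using fequiv_vimage[OF bij_is_inj[OF bij_rho] e] .
  hence p: "pos_or (rho \<circ> P \<circ> rho)" unfolding pos_or_def v rho_vimage_cNN .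
  have "flux (rho \<circ> P \<circ> rho) = delta (rho -` (-NN)) (rho -` (- (P -` NN)))"
    unfolding flux_def v rho_vimage_cNN ..
  also have "\<dots> = - flux P" unfolding delta_vimage[OF bij_rho] delta_compl flux_def ..
  finally show ?thesis using p by simp
qed

lemma noboth_left: "pos_or P \<Longrightarrow> pos_or (rho \<circ> P) \<Longrightarrow> False"
proof -
  assume a: "pos_or P" "pos_or (rho \<circ> P)"
  have "(rho \<circ> P) -` NN = - (P -` NN)" by (auto simp: rho_def NN_def)
  hence "fequiv NN (- (P -` NN))" using a(2) unfolding pos_or_def by simp
  moreover have "fequiv (-NN) (- (P -` NN))" using a(1) fequiv_compl unfolding pos_or_def by blast
  ultimately show False using not_fequiv_NN fequiv_trans fequiv_sym by blast
qed

lemma noboth_right: "pos_or P \<Longrightarrow> pos_or (P \<circ> rho) \<Longrightarrow> False"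
proof -
  assume a: "pos_or P" "pos_or (P \<circ> rho)"
  have "(P \<circ> rho) -` NN = rho -` (P -` NN)" by auto
  hence "fequiv NN (rho -` (P -` NN))" using a(2) unfolding pos_or_def by simp
  moreover have "fequiv (rho -` NN) (rho -` (P -` NN))"
    using a(1) fequiv_vimage[OF bij_is_inj[OF bij_rho]] unfolding pos_or_def by blast
  ultimately show False using not_fequiv_NN fequiv_trans fequiv_sym rho_vimage_NN by metis
qed

lemma lamF: "lam (D m False) = tau (2*m)" by (auto simp: tau_def fun_eq_iff)
lemma lamT: "lam (D m True) = tau (2*m) \<circ> rho" by (auto simp: tau_def rho_def fun_eq_iff)
lemma bij_lam: "bij (lam h)"
proof -
  obtain m e where "h = D m e" by (cases h)
  thus ?thesis by (cases e) (auto simp: lamF lamT bij_tau bij_rho intro: bij_comp)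
qed

lemma core:
  assumes bR: "bij R" and pR: "pos_or R" and pR': "pos_or R'"
    and fR: "flux R \<in> {0,1}" and fR': "flux R' \<in> {0,1}"
    and eq: "R' = lam \<kappa> \<circ> R \<circ> lam h"
  shows "\<kappa> = phik (- flux R) (dinv h) \<and> flux R' = flux R"
proof -
  obtain a e where h: "h = D a e" by (cases h)
  obtain m e' where k: "\<kappa> = D m e'" by (cases \<kappa>)
  show ?thesis
  proof (cases e)
    case False
    note eF = False
    show ?thesis
    proof (cases e')
      case False
      have "R' = tau (2*m) \<circ> (R \<circ> tau (2*a))" using eq h k eF False by (simp add: lamF comp_assoc)
      moreover have pc: "pos_or (R \<circ> tau (2*a)) \<and> flux (R \<circ> tau (2*a)) = flux R - 2*a"
        using pos_or_comp[OF pR _ bij_tau] tau_pos_or by auto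
      ultimately have "flux R' = -2*m + flux R - 2*a"
        using pos_or_comp[OF tau_pos_or[THEN conjunct1] pc[THEN conjunct1] bij_comp[OF bij_tau bR], of "2*m"]
          tau_pos_or[of "2*m"] by simp
      hence "m = -a" "flux R' = flux R" using fR fR' by auto
      thus ?thesis using h k eF False by simp
    next
      case True
      have "R' = tau (2*m) \<circ> rho \<circ> (R \<circ> tau (2*a))" using eq h k eF True
        by (simp add: lamF lamT comp_assoc)
      hence "tau (-2*m) \<circ> R' = rho \<circ> (R \<circ> tau (2*a))"
        by (simp add: comp_assoc fun_eq_iff tau_def)
      moreover have "pos_or (R \<circ> tau (2*a))"
        using pos_or_comp[OF pR _ bij_tau] tau_pos_or by auto
      moreover have bR': "bij R'" using eq bij_lam bR by (simp add: bij_comp)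
      hence "pos_or (tau (-2*m) \<circ> R')" using pos_or_comp[OF _ pR'] tau_pos_or by blast
      ultimately have False using noboth_left[of "tau (-2*m) \<circ> R'"]
        by (simp add: comp_assoc[symmetric] rho_rho)
      thus ?thesis ..
    qed
  next
    case True
    note eT = True
    show ?thesis
    proof (cases e')
      case False
      have "R' = tau (2*m) \<circ> R \<circ> tau (2*a) \<circ> rho" using eq h k eT False
        by (simp add: lamF lamT comp_assoc)
      hence "R' \<circ> rho = tau (2*m) \<circ> (R \<circ> tau (2*a))" by (simp add: comp_assoc rho_rho)
      moreover have "pos_or (R \<circ> tau (2*a))"
        using pos_or_comp[OF pR _ bij_tau] tau_pos_or by auto
      ultimately have "pos_or (R' \<circ> rho)"
        using pos_or_comp[OF tau_pos_or[THEN conjunct1]] bij_comp bij_tau bR by metis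
      hence False using noboth_right pR' by blast
      thus ?thesis ..
    next
      case True
      have "R' = tau (2*m) \<circ> rho \<circ> R \<circ> (tau (2*a) \<circ> rho)" using eq h k eT True
        by (simp add: lamF lamT comp_assoc)
      also have "\<dots> = tau (2*m) \<circ> ((rho \<circ> R \<circ> rho) \<circ> tau (-2*a))"
        by (simp add: fun_eq_iff tau_def rho_def algebra_simps)
      finally have R'eq: "R' = tau (2*m) \<circ> ((rho \<circ> R \<circ> rho) \<circ> tau (-2*a))" .
      have c: "pos_or (rho \<circ> R \<circ> rho) \<and> flux (rho \<circ> R \<circ> rho) = - flux R"
        using conj_pos_or[OF pR] .
      have b2: "bij (rho \<circ> R \<circ> rho)" using bR bij_rho by (simp add: bij_comp)
      have c2: "pos_or ((rho \<circ> R \<circ> rho) \<circ> tau (-2*a)) \<and>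
          flux ((rho \<circ> R \<circ> rho) \<circ> tau (-2*a)) = - flux R + 2*a"
        using pos_or_comp[OF c[THEN conjunct1] _ bij_tau, of "-2*a"] tau_pos_or c by auto
      have b3: "bij ((rho \<circ> R \<circ> rho) \<circ> tau (-2*a))" using b2 bij_tau by (simp add: bij_comp)
      have "flux R' = -2*m - flux R + 2*a"
        using pos_or_comp[OF tau_pos_or[THEN conjunct1] c2[THEN conjunct1] b3, of "2*m"]
          tau_pos_or[of "2*m"] c2 R'eq by simp
      hence "m = a - flux R" "flux R' = flux R" using fR fR' by (auto; presburger)+
      thus ?thesis using h k eT True by simp
    qed
  qed
qed

lemma lip_aux:
  fixes Q :: "int \<Rightarrow> int"
  assumes "\<forall>j. \<bar>Q (j+1) - Q j\<bar> \<le> M'"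
  shows "\<bar>Q (a + int d) - Q a\<bar> \<le> M' * int d"
proof (induction d)
  case 0 thus ?case by simp
next
  case (Suc d)
  have "\<bar>Q (a + int d + 1) - Q (a + int d)\<bar> \<le> M'" using assms by blast
  thus ?case using Suc by (simp add: algebra_simps)
qed

lemma lip:
  fixes Q :: "int \<Rightarrow> int"
  assumes "\<forall>j. \<bar>Q (j+1) - Q j\<bar> \<le> M'"
  shows "\<bar>Q a - Q b\<bar> \<le> M' * \<bar>a - b\<bar>"
proof (cases "a \<le> b")
  case True
  have "b = a + int (nat (b - a))" using True by simp
  hence "\<bar>Q b - Q a\<bar> \<le> M' * int (nat (b - a))" using lip_aux[OF assms, of a "nat (b-a)"] by simp
  thus ?thesis using True by (simp add: abs_minus_commute)
next
  case False
  have "a = b + int (nat (a - b))" using False by simp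
  hence "\<bar>Q a - Q b\<bar> \<le> M' * int (nat (a - b))" using lip_aux[OF assms, of b "nat (a-b)"] by simp
  thus ?thesis using False by simp
qed

lemma dichotomy:
  fixes P Q :: "int \<Rightarrow> int" and M M' :: int
  assumes P0: "P 0 = 0" and sP: "\<forall>j. \<bar>P (j+1) - P j\<bar> \<le> M"
    and sQ: "\<forall>j. \<bar>Q (j+1) - Q j\<bar> \<le> M'"
    and QP: "\<forall>j. Q (P j) = j" and PQ: "\<forall>j. P (Q j) = j" and M: "M \<ge> 0" and M': "M' \<ge> 1"
  shows "(\<forall>j > M*M'. 0 < P j) \<and> (\<forall>j < -(M*M'). P j < 0) \<or>
         (\<forall>j > M*M'. P j < 0) \<and> (\<forall>j < -(M*M'). 0 < P j)"
proof -
  define K where "K = M*M'"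
  have big: "M < \<bar>P j\<bar>" if "K < \<bar>j\<bar>" for j
  proof (rule ccontr)
    assume "\<not> M < \<bar>P j\<bar>"
    hence "M' * \<bar>P j\<bar> \<le> M' * M" using M' by (simp add: mult_left_mono)
    moreover have "\<bar>Q (P j) - Q (P 0)\<bar> \<le> M' * \<bar>P j - P 0\<bar>" using lip[OF sQ] .
    moreover have "Q 0 = 0" using QP P0 by metis
    ultimately show False using QP P0 that unfolding K_def by (simp add: mult.commute)
  qed
  have up: "(0 < P (K+1) \<longrightarrow> 0 < P (K + 1 + int d)) \<and> (P (K+1) < 0 \<longrightarrow> P (K + 1 + int d) < 0)"
    for d :: nat
  proof (induction d)
    case 0 thus ?case by simp
  next
    case (Suc d)
    have K0: "K \<ge> 0" using M M' unfolding K_def by simp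
    have b: "M < \<bar>P (K + 1 + int d)\<bar>" using big K0 by simp
    have s: "\<bar>P (K + 1 + int d + 1) - P (K + 1 + int d)\<bar> \<le> M" using sP by blast
    show ?case using Suc b s by (simp add: add.assoc) linarith
  qed
  have down: "(0 < P (-K-1) \<longrightarrow> 0 < P (-K - 1 - int d)) \<and> (P (-K-1) < 0 \<longrightarrow> P (-K - 1 - int d) < 0)"
    for d :: nat
  proof (induction d)
    case 0 thus ?case by simp
  next
    case (Suc d)
    have K0: "K \<ge> 0" using M M' unfolding K_def by simp
    define j where "j = -K - 1 - int d"
    have b: "M < \<bar>P j\<bar>" using big K0 unfolding j_def by simp
    have s: "\<bar>P j - P (j - 1)\<bar> \<le> M" using sP[rule_format, of "j-1"] by simp
    have e: "-K - 1 - int (Suc d) = j - 1" unfolding j_def by simp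
    show ?case unfolding e using Suc[folded j_def] b s by linarith
  qed
  have K0: "K \<ge> 0" using M M' unfolding K_def by simp
  have up': "(0 < P (K+1) \<longrightarrow> 0 < P j) \<and> (P (K+1) < 0 \<longrightarrow> P j < 0)" if "j > K" for j
    using up[of "nat (j - K - 1)"] that by simp
  have down': "(0 < P (-K-1) \<longrightarrow> 0 < P j) \<and> (P (-K-1) < 0 \<longrightarrow> P j < 0)" if "j < -K" for j
    using down[of "nat (-K - 1 - j)"] that by simp
  have n1: "P (K+1) \<noteq> 0" using big[of "K+1"] K0 M by auto
  have n2: "P (-K-1) \<noteq> 0" using big[of "-K-1"] K0 M by auto
  have injQ: "inj Q" by (metis PQ injI)
  have same_pos: False if "0 < P (K+1)" "0 < P (-K-1)"
  proof -
    have "Q ` {..<0} \<subseteq> {-K..K}"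
    proof
      fix y assume "y \<in> Q ` {..<0}"
      then obtain v where v: "v < 0" "y = Q v" by auto
      have "P y < 0" using v PQ by simp
      thus "y \<in> {-K..K}" using up'[of y] down'[of y] that by force
    qed
    hence "finite (Q ` {..<0})" using finite_subset by blast
    hence "finite {..<(0::int)}" using finite_imageD injQ by (metis inj_on_subset top_greatest)
    thus False using infinite_Iio by blast
  qed
  have same_neg: False if "P (K+1) < 0" "P (-K-1) < 0"
  proof -
    have "Q ` {0..} \<subseteq> {-K..K}"
    proof
      fix y assume "y \<in> Q ` {0..}"
      then obtain v where v: "0 \<le> v" "y = Q v" by auto
      have "0 \<le> P y" using v PQ by simp
      thus "y \<in> {-K..K}" using up'[of y] down'[of y] that by force
    qed
    hence "finite (Q ` {0..})" using finite_subset by blast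
    hence "finite {(0::int)..}" using finite_imageD injQ by (metis inj_on_subset top_greatest)
    thus False using infinite_Ici by blast
  qed
  show ?thesis
  proof (cases "0 < P (K+1)")
    case True
    hence "P (-K-1) < 0" using same_pos n2 by force
    thus ?thesis using True up' down' unfolding K_def by blast
  next
    case False
    hence a: "P (K+1) < 0" using n1 by simp
    hence "0 < P (-K-1)" using same_neg n2 by force
    thus ?thesis using a up' down' unfolding K_def by blast
  qed
qed

definition pattern :: "int \<Rightarrow> (int \<Rightarrow> int) \<Rightarrow> bool" where
  "pattern K P \<longleftrightarrow> (\<forall>j>K. 0 \<le> P j) \<and> (\<forall>j < -K. P j < 0)"
definition fluxw :: "int \<Rightarrow> (int \<Rightarrow> int) \<Rightarrow> int" where
  "fluxw K P = int (card {j\<in>{0..K}. P j < 0}) - int (card {j\<in>{-K..-1}. 0 \<le> P j})"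

lemma pattern_flux:
  assumes "pattern K P"
  shows "pos_or P \<and> flux P = fluxw K P"
proof -
  have a: "NN - P -` NN = {j\<in>{0..K}. P j < 0}" using assms
    unfolding pattern_def NN_def by (intro set_eqI) (simp, smt (verit))
  have b: "P -` NN - NN = {j\<in>{-K..-1}. 0 \<le> P j}" using assms
    unfolding pattern_def NN_def by (intro set_eqI) (simp, smt (verit))
  have f1: "finite {j\<in>{0..K}. P j < 0}" by (rule finite_subset[of _ "{0..K}"]) auto
  have f2: "finite {j\<in>{-K..-1}. 0 \<le> P j}" by (rule finite_subset[of _ "{-K..-1}"]) auto
  show ?thesis unfolding pos_or_def flux_def fequiv_def delta_def a b fluxw_def using f1 f2 by simp
qed

definition Lw :: "int \<Rightarrow> (int \<Rightarrow> int) \<Rightarrow> dinf" where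
  "Lw K P = (if 0 < P (K+1) then D (fluxw K P div 2) False else D (fluxw K (rho \<circ> P) div 2) True)"
definition Fw :: "int \<Rightarrow> (int \<Rightarrow> int) \<Rightarrow> int" where
  "Fw K P = (if 0 < P (K+1) then fluxw K P mod 2 else fluxw K (rho \<circ> P) mod 2)"

lemma window:
  assumes "\<forall>j\<in>{-K..K+1}. P j = P' j" "K \<ge> 0"
  shows "Lw K P = Lw K P' \<and> Fw K P = Fw K P'"
proof -
  have "fluxw K P = fluxw K P'" unfolding fluxw_def using assms
    by (smt (verit, best) Collect_cong atLeastAtMost_iff)
  moreover have "fluxw K (rho \<circ> P) = fluxw K (rho \<circ> P')" unfolding fluxw_def using assms
    by (smt (verit, best) Collect_cong atLeastAtMost_iff comp_apply)
  moreover have "P (K+1) = P' (K+1)" using assms by auto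
  ultimately show ?thesis unfolding Lw_def Fw_def by simp
qed

lemma normalize:
  assumes bP: "bij P"
    and d: "(\<forall>j > K. 0 < P j) \<and> (\<forall>j < -K. P j < 0) \<or> (\<forall>j > K. P j < 0) \<and> (\<forall>j < -K. 0 < P j)"
  shows "pos_or (lam (Lw K P) \<circ> P) \<and> flux (lam (Lw K P) \<circ> P) = Fw K P \<and> Fw K P \<in> {0,1}"
  using d
proof
  assume a: "(\<forall>j > K. 0 < P j) \<and> (\<forall>j < -K. P j < 0)"
  hence pt: "pattern K P" unfolding pattern_def by force
  have p: "0 < P (K+1)" using a by simp
  have e: "lam (Lw K P) \<circ> P = tau (2 * (fluxw K P div 2)) \<circ> P" using p by (simp add: Lw_def lamF)
  have "pos_or (tau (2 * (fluxw K P div 2)) \<circ> P) \<and>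
        flux (tau (2 * (fluxw K P div 2)) \<circ> P) = - (2 * (fluxw K P div 2)) + fluxw K P"
    using pos_or_comp[OF tau_pos_or[THEN conjunct1] pattern_flux[OF pt, THEN conjunct1] bP]
      tau_pos_or pattern_flux[OF pt] by simp
  thus ?thesis unfolding e Fw_def using p by (auto simp: minus_div_mult_eq_mod[symmetric])
next
  assume a: "(\<forall>j > K. P j < 0) \<and> (\<forall>j < -K. 0 < P j)"
  hence pt: "pattern K (rho \<circ> P)" unfolding pattern_def rho_def by force
  have p: "\<not> 0 < P (K+1)" using a[THEN conjunct1, rule_format, of "K+1"] by simp
  have bP': "bij (rho \<circ> P)" using bP bij_rho bij_comp by blast
  have e: "lam (Lw K P) \<circ> P = tau (2 * (fluxw K (rho \<circ> P) div 2)) \<circ> (rho \<circ> P)"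
    using p by (simp add: Lw_def lamT comp_assoc)
  have "pos_or (tau (2 * (fluxw K (rho \<circ> P) div 2)) \<circ> (rho \<circ> P)) \<and>
        flux (tau (2 * (fluxw K (rho \<circ> P) div 2)) \<circ> (rho \<circ> P)) =
          - (2 * (fluxw K (rho \<circ> P) div 2)) + fluxw K (rho \<circ> P)"
    using pos_or_comp[OF tau_pos_or[THEN conjunct1] pattern_flux[OF pt, THEN conjunct1] bP']
      tau_pos_or pattern_flux[OF pt] by simp
  thus ?thesis unfolding e Fw_def using p by (auto simp: minus_div_mult_eq_mod[symmetric])
qed

lemma finite_range_dinf:
  fixes f :: "'x::topological_space \<Rightarrow> dinf"
  assumes "compact (UNIV :: 'x set)" "cont_to_dinf f"
  shows "finite (range f)"
proof -
  let ?C = "(\<lambda>h. {x. f x = h}) ` range f"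
  have "UNIV \<subseteq> \<Union>?C" by auto
  moreover have "\<And>B. B \<in> ?C \<Longrightarrow> open B" using assms(2) unfolding cont_to_dinf_def by auto
  ultimately obtain C' where C': "C' \<subseteq> ?C" "finite C'" "UNIV \<subseteq> \<Union>C'"
    using compactE[OF assms(1)] by metis
  obtain H where H: "H \<subseteq> range f" "C' = (\<lambda>h. {x. f x = h}) ` H" "finite H"
    using C'(1,2) by (meson finite_subset_image)
  have "range f \<subseteq> H" using C'(3) H(2) by auto
  thus ?thesis using H(3) finite_subset by blast
qed

lemma bounded_num:
  fixes f :: "'x::topological_space \<Rightarrow> dinf"
  assumes "compact (UNIV :: 'x set)" "cont_to_dinf f"
  shows "\<exists>B. \<forall>y. \<bar>num (f y)\<bar> \<le> B"
proof -
  have fin: "finite (range f)" using finite_range_dinf[OF assms] .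
  have "\<bar>num (f y)\<bar> \<le> (\<Sum>h\<in>range f. \<bar>num h\<bar>)" for y
    using member_le_sum[OF _ _ fin, of "f y" "\<lambda>h. \<bar>num h\<bar>"] by auto
  thus ?thesis by blast
qed

lemma cont_to_dinf_dep:
  assumes "\<And>a. cont_to_dinf (F a)" "cont_to_dinf f"
  shows "cont_to_dinf (\<lambda>x. F (f x) x)"
  unfolding cont_to_dinf_def
proof
  fix b
  have "{x. F (f x) x = b} = (\<Union>a. {x. f x = a} \<inter> {x. F a x = b})" by auto
  moreover have "open (\<Union>a. {x. f x = a} \<inter> {x. F a x = b})"
    apply (rule open_UN) using assms unfolding cont_to_dinf_def by auto
  ultimately show "open {x. F (f x) x = b}" by simp
qed

lemma cont_to_dinf_comp:
  assumes "continuous_on UNIV h" "cont_to_dinf f"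
  shows "cont_to_dinf (\<lambda>x. f (h x))"
  unfolding cont_to_dinf_def
proof
  fix b
  have "{x. f (h x) = b} = h -` {y. f y = b}" by auto
  thus "open {x. f (h x) = b}" using assms open_vimage unfolding cont_to_dinf_def by metis
qed

lemma cont_to_dinf_const: "cont_to_dinf (\<lambda>x. a)"
  unfolding cont_to_dinf_def by auto

lemma act_inv:
  assumes "cont_action a"
  shows "a g (a (dinv g) z) = z" "a (dinv g) (a g z) = z"
  using assms unfolding cont_action_def
  by (metis dinv_r dinv_l)+

lemma act_open:
  assumes "cont_action a" "open V"
  shows "open (a g ` V)"
proof -
  have "a g ` V = a (dinv g) -` V"
    using act_inv[OF assms(1)] by (auto simp: image_def) (metis)
  thus ?thesis using assms open_vimage unfolding cont_action_def by metis
qed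

lemma compact_discrete_finite:
  assumes "compact (UNIV :: 'x::topological_space set)" "\<And>z::'x. open {z}"
  shows "finite (UNIV :: 'x set)"
proof -
  let ?C = "(\<lambda>z. {z}) ` (UNIV :: 'x set)"
  have "UNIV \<subseteq> \<Union>?C" by auto
  then obtain C' where C': "C' \<subseteq> ?C" "finite C'" "UNIV \<subseteq> \<Union>C'"
    using compactE[OF assms(1)] assms(2) by (metis imageE)
  have "finite (\<Union>C')" using C' by auto
  thus ?thesis using C'(3) finite_subset by blast
qed

lemma period_finite:
  assumes a: "cont_action a" and p: "p \<noteq> 0" and y: "a (D p False) y = y"
  shows "finite {a g y | g. g \<in> UNIV}"
proof -
  have act: "a (dmul g h) z = a g (a h z)" for g h z using a unfolding cont_action_def by blast
  have un: "a dunit z = z" for z using a unfolding cont_action_def by blast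
  have ym: "a (D (-p) False) y = y"
  proof -
    have "a (D (-p) False) y = a (D (-p) False) (a (D p False) y)" using y by simp
    also have "\<dots> = a (dmul (D (-p) False) (D p False)) y" by (rule act[symmetric])
    also have "\<dots> = y" using un by (simp add: dunit_def)
    finally show ?thesis .
  qed
  have mult: "a (D (k*p) False) y = y" for k
  proof (induction k rule: int_induct[where k=0])
    case base thus ?case using un by (simp add: dunit_def)
  next
    case (step1 i)
    have eq: "D ((i+1)*p) False = dmul (D p False) (D (i*p) False)"
      by (simp add: algebra_simps)
    have "a (D ((i+1)*p) False) y = a (D p False) (a (D (i*p) False) y)" unfolding eq by (rule act)
    thus ?case using step1 y by simp
  next
    case (step2 i)
    have eq: "D ((i-1)*p) False = dmul (D (-p) False) (D (i*p) False)"
      by (simp add: algebra_simps)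
    have "a (D ((i-1)*p) False) y = a (D (-p) False) (a (D (i*p) False) y)" unfolding eq by (rule act)
    thus ?case using step2 ym by simp
  qed
  have "{a g y | g. g \<in> UNIV} \<subseteq> (\<lambda>(j,e). a (D j e) y) ` ({-\<bar>p\<bar>..\<bar>p\<bar>} \<times> UNIV)"
  proof
    fix z assume "z \<in> {a g y | g. g \<in> UNIV}"
    then obtain g where z: "z = a g y" by auto
    obtain m e where g: "g = D m e" by (cases g)
    define b where "b = (if e then - (m div p) else m div p) * p"
    have gd: "g = dmul (D (m mod p) e) (D b False)"
      unfolding g b_def by (simp add: algebra_simps)
    have "z = a (D (m mod p) e) (a (D b False) y)" unfolding z gd by (rule act)
    hence "z = a (D (m mod p) e) y" using mult[of "if e then - (m div p) else m div p"]
      unfolding b_def by simp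
    moreover have "m mod p \<in> {-\<bar>p\<bar>..\<bar>p\<bar>}" using p
    proof (cases "p > 0")
      case True thus ?thesis using pos_mod_sign[OF True, of m] pos_mod_bound[OF True, of m] by auto
    next
      case False hence "p < 0" using p by simp
      thus ?thesis using neg_mod_sign[OF \<open>p < 0\<close>, of m] neg_mod_bound[OF \<open>p < 0\<close>, of m] by auto
    qed
    ultimately show "z \<in> (\<lambda>(j,e). a (D j e) y) ` ({-\<bar>p\<bar>..\<bar>p\<bar>} \<times> UNIV)" by force
  qed
  thus ?thesis by (rule finite_subset) auto
qed

lemma dense_meets:
  assumes "closure S = UNIV" "open V" "V \<noteq> {}"
  shows "S \<inter> V \<noteq> {}"
proof
  assume "S \<inter> V = {}"
  hence "S \<subseteq> -V" by auto
  hence "closure S \<subseteq> -V" using assms(2) by (simp add: closure_minimal open_closed)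
  thus False using assms by auto
qed

lemma TF:
  fixes a :: "dinf \<Rightarrow> 'x::t2_space \<Rightarrow> 'x"
  assumes cp: "compact (UNIV :: 'x set)" and inf: "infinite (UNIV :: 'x set)"
    and a: "cont_action a" and mn: "minimal_action a"
    and V: "open V" "V \<noteq> {}" and fx: "\<forall>z\<in>V. a r z = z"
  shows "r = dunit"
proof (rule ccontr)
  assume rne: "r \<noteq> dunit"
  have act: "a (dmul g h) z = a g (a h z)" for g h z using a unfolding cont_action_def by blast
  have un: "a dunit z = z" for z using a unfolding cont_action_def by blast
  have fin_contra: False if "p \<noteq> 0" "a (D p False) y = y" for p y
  proof -
    have "finite {a g y | g. g \<in> UNIV}" using period_finite[OF a that] .
    hence "closed {a g y | g. g \<in> UNIV}" by (rule finite_imp_closed)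
    moreover have "closure {a g y | g. g \<in> UNIV} = UNIV" using mn unfolding minimal_on_def by (rule spec)
    ultimately have "{a g y | g. g \<in> UNIV} = UNIV" using closure_closed by metis
    thus False using \<open>finite {a g y | g. g \<in> UNIV}\<close> inf by simp
  qed
  obtain x where x: "x \<in> V" using V by auto
  obtain n e where r: "r = D n e" by (cases r)
  show False
  proof (cases e)
    case False
    hence "n \<noteq> 0" using rne r by (auto simp: dunit_def)
    thus False using fin_contra[of n x] fx x r False by auto
  next
    case True
    have rx: "a r x = x" using fx x by auto
    have orb: "a (D m True) x = a (D (m - n) False) x" for m
    proof -
      have "a (D m True) x = a (D m True) (a r x)" using rx by simp
      also have "\<dots> = a (dmul (D m True) r) x" using act by simp
      finally show ?thesis using r True by simp
    qed
    show False
    proof (cases "\<exists>j. j \<noteq> 0 \<and> a (D j False) x \<in> V")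
      case True
      then obtain j where j: "j \<noteq> 0" "a (D j False) x \<in> V" by auto
      have "a r (a (D j False) x) = a (D j False) x" using fx j by auto
      moreover have "a (D n True) (a (D j False) x) = a (D (n - j) True) x"
        using act[of "D n True" "D j False" x] by simp
      ultimately have "a (D (n - j) True) x = a (D j False) x" using r \<open>e\<close> by simp
      hence e1: "a (D (-j) False) x = a (D j False) x" using orb[of "n-j"] by simp
      have "a (D (2*j) False) x = a (D j False) (a (D j False) x)"
        using act[of "D j False" "D j False" x] by simp
      also have "\<dots> = a (D j False) (a (D (-j) False) x)" using e1 by simp
      also have "\<dots> = x" using act[of "D j False" "D (-j) False" x] un by (simp add: dunit_def)
      finally show False using fin_contra[of "2*j" x] j by simp
    next
      case False
      have "V - {x} = {}"
      proof (rule ccontr)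
        assume "V - {x} \<noteq> {}"
        moreover have "open (V - {x})" using V by (simp add: open_Diff)
        moreover have "closure {a g x | g. g \<in> UNIV} = UNIV" using mn unfolding minimal_on_def by (rule spec)
        ultimately have "{a g x | g. g \<in> UNIV} \<inter> (V - {x}) \<noteq> {}" using dense_meets by blast
        then obtain z where z: "z \<in> {a g x | g. g \<in> UNIV}" "z \<in> V - {x}" by blast
        then obtain g where g: "z = a g x" by auto
        obtain m f where gm: "g = D m f" by (cases g)
        obtain j where zj: "z = a (D j False) x"
        proof (cases f)
          case True thus ?thesis using that[of "m - n"] orb[of m] g gm by simp
        next
          case False thus ?thesis using that[of m] g gm by simp
        qed
        show False
        proof (cases "j = 0")
          case True
          have "a (D 0 False) x = x" using un[of x] by (simp add: dunit_def)
          hence "z = x" using zj True by simp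
          thus False using z(2) by simp
        next
          case False
          have "a (D j False) x \<in> V" using z(2) zj by simp
          thus False using \<open>\<not> (\<exists>j. j \<noteq> 0 \<and> a (D j False) x \<in> V)\<close> False by blast
        qed
      qed
      hence Vx: "V = {x}" using x by auto
      have "open {z}" for z :: 'x
      proof -
        have "closure {a g z | g. g \<in> UNIV} = UNIV" using mn unfolding minimal_on_def by (rule spec)
        hence "{a g z | g. g \<in> UNIV} \<inter> V \<noteq> {}" using dense_meets V by blast
        then obtain g where "a g z \<in> V" by blast
        hence "a g z = x" using Vx by auto
        hence "{z} = a (dinv g) ` {x}" using act_inv(2)[OF a, of g z] by simp
        thus ?thesis using act_open[OF a] V Vx by metis
      qed
      thus False using compact_discrete_finite[OF cp] inf by blast
    qed
  qed
qed

lemma cont_post: "cont_to_dinf f \<Longrightarrow> cont_to_dinf (\<lambda>x. h (f x))"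
  using cont_to_dinf_dep[of "\<lambda>a x. h a" f] cont_to_dinf_const by blast
lemma cont_mul: "cont_to_dinf f \<Longrightarrow> cont_to_dinf g \<Longrightarrow> cont_to_dinf (\<lambda>x. dmul (f x) (g x))"
  using cont_to_dinf_dep[of "\<lambda>a x. dmul a (g x)" f] cont_post[of g] by blast

lemma inv_eq: "dmul (dinv w) v = dunit \<Longrightarrow> v = w"
  by (metis dinv_r dmul_assoc dmul_unit_l dmul_unit_r)
lemma idem_unit: "dmul u u = u \<Longrightarrow> u = dunit"
  by (metis dinv_l dmul_assoc dmul_unit_l)
lemma solve_l: "A = dmul B C \<Longrightarrow> B = dmul A (dinv C)"
  by (simp add: dmul_assoc)
lemma cancel1[simp]: "dmul (dinv A) (dmul A C) = C" by (simp add: dmul_assoc[symmetric])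
lemma cancel2[simp]: "dmul A (dmul (dinv A) C) = C" by (simp add: dmul_assoc[symmetric])
lemma lam_inv_l': "lam (dinv a) \<circ> (lam a \<circ> F) = F"
  by (metis comp_assoc lam_inv_l id_comp)
lemma grp: "dmul (dinv A) (dmul (dmul A (dmul C (dinv B))) B) = C"
  by (simp add: dmul_assoc)

lemma TFw:
  fixes a :: "dinf \<Rightarrow> 'x::t2_space \<Rightarrow> 'x" and \<psi> :: "'y::topological_space \<Rightarrow> 'x"
  assumes cp: "compact (UNIV :: 'x set)" and inf: "infinite (UNIV :: 'x set)"
    and a: "cont_action a" and mn: "minimal_action a"
    and om: "\<And>V. open V \<Longrightarrow> open (\<psi> ` V)"
    and u: "cont_to_dinf u" and fx: "\<And>x. a (u x) (\<psi> x) = \<psi> x"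
  shows "u x = dunit"
proof -
  let ?V = "\<psi> ` {y. u y = u x}"
  have "open ?V" using om u unfolding cont_to_dinf_def by blast
  moreover have "?V \<noteq> {}" by auto
  moreover have "\<forall>z\<in>?V. a (u x) z = z" using fx by (metis (mono_tags) imageE mem_Collect_eq)
  ultimately show ?thesis using TF[OF cp inf a mn] by blast
qed

lemma step_bound:
  fixes d :: "dinf \<Rightarrow> 'x::topological_space \<Rightarrow> dinf"
  assumes cp: "compact (UNIV :: 'x set)" and d: "cont_cocycle d"
    and coc: "\<And>h g y. d (dmul h g) y = dmul (d h (a g y)) (d g y)"
  shows "\<exists>M\<ge>0. \<forall>y j. \<bar>iota (d (gam (j+1)) y) - iota (d (gam j) y)\<bar> \<le> M"
proof -
  obtain B1 where B1: "\<forall>y. \<bar>num (d dt y)\<bar> \<le> B1"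
    using bounded_num[OF cp] d unfolding cont_cocycle_def by blast
  obtain B2 where B2: "\<forall>y. \<bar>num (d (D 1 True) y)\<bar> \<le> B2"
    using bounded_num[OF cp] d unfolding cont_cocycle_def by blast
  have b1: "B1 \<ge> 0" using B1 by (meson abs_ge_zero order_trans)
  have b2: "B2 \<ge> 0" using B2 by (meson abs_ge_zero order_trans)
  have "\<bar>iota (d (gam (j+1)) y) - iota (d (gam j) y)\<bar> \<le> 2*(B1+B2)+1" for y j
  proof -
    obtain r where r: "r = dt \<or> r = D 1 True" "gam (j+1) = dmul r (gam j)"
      using gam_succ by blast
    have "\<bar>iota (d (gam (j+1)) y) - iota (d (gam j) y)\<bar> \<le> 2 * \<bar>num (d r (a (gam j) y))\<bar> + 1"
      unfolding r(2) coc using iota_step .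
    moreover have "\<bar>num (d r (a (gam j) y))\<bar> \<le> B1 + B2"
      using r(1)
    proof
      assume "r = dt" thus ?thesis using B1[rule_format, of "a (gam j) y"] b2 by simp
    next
      assume "r = D 1 True" thus ?thesis using B2[rule_format, of "a (gam j) y"] b1 by simp
    qed
    ultimately show ?thesis by (smt (verit, best))
  qed
  thus ?thesis using b1 b2 by (intro exI[of _ "2*(B1+B2)+1"]) auto
qed

theorem mainTheorem10:
  fixes \<alpha> \<beta> :: "dinf \<Rightarrow> 'x::t2_space \<Rightarrow> 'x"
    and \<phi> :: "'x \<Rightarrow> 'x" and c :: "dinf \<Rightarrow> 'x \<Rightarrow> dinf"
  assumes "compact (UNIV :: 'x set)" and "infinite (UNIV :: 'x set)"
    and "cont_action \<alpha>" and "cont_action \<beta>"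
    and "minimal_action \<alpha>" and "minimal_action \<beta>"
    and "coe_via \<alpha> \<beta> \<phi> c"
    and "minimal_on sgrp \<alpha>"
  shows "\<exists>L' :: 'x \<Rightarrow> dinf. \<exists>k :: int. cont_to_dinf L' \<and>
           (\<forall>g x. c g x = dmul (dinv (L' (\<alpha> g x))) (dmul (phik k g) (L' x)))"
proof -
  note cp = assms(1) and inf = assms(2) and a = assms(3) and b = assms(4)
    and ma = assms(5) and mb = assms(6)
  have hom: "homeomorphism UNIV UNIV \<phi> (inv \<phi>)" and cc: "cont_cocycle c"
    and ceq: "\<And>g x. \<phi> (\<alpha> g x) = \<beta> (c g x) (\<phi> x)"
    using assms(7) unfolding coe_via_def by blast+
  obtain c' where cc': "cont_cocycle c'" and ceq': "\<And>g y. inv \<phi> (\<beta> g y) = \<alpha> (c' g y) (inv \<phi> y)"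
    using assms(7) unfolding coe_via_def by blast
  have ip: "\<And>x. inv \<phi> (\<phi> x) = x" and pi: "\<And>y. \<phi> (inv \<phi> y) = y"
    and cphi: "continuous_on UNIV \<phi>" and ciphi: "continuous_on UNIV (inv \<phi>)"
    using hom unfolding homeomorphism_def by auto
  have om1: "open (\<phi> ` V)" if "open V" for V
  proof -
    have "\<phi> ` V = inv \<phi> -` V" using ip pi by (auto simp: image_def) (metis)
    thus ?thesis using open_vimage[OF that ciphi] by simp
  qed
  have om2: "open (inv \<phi> ` V)" if "open V" for V
  proof -
    have "inv \<phi> ` V = \<phi> -` V" using ip pi by (auto simp: image_def) (metis)
    thus ?thesis using open_vimage[OF that cphi] by simp
  qed
  have actA: "\<alpha> (dmul g h) z = \<alpha> g (\<alpha> h z)" for g h z using a unfolding cont_action_def by blast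
  have actB: "\<beta> (dmul g h) z = \<beta> g (\<beta> h z)" for g h z using b unfolding cont_action_def by blast
  have contA: "continuous_on UNIV (\<alpha> g)" for g using a unfolding cont_action_def by blast
  have contB: "continuous_on UNIV (\<beta> g)" for g using b unfolding cont_action_def by blast
  have ccg: "cont_to_dinf (c g)" for g using cc unfolding cont_cocycle_def by blast
  have ccg': "cont_to_dinf (c' g)" for g using cc' unfolding cont_cocycle_def by blast
  have TFb: "u x = dunit" if "cont_to_dinf u" "\<And>x. \<beta> (u x) (\<phi> x) = \<phi> x" for u x
    using TFw[OF cp inf b mb om1 that] .
  have TFa: "u x = dunit" if "cont_to_dinf u" "\<And>x. \<alpha> (u x) (inv \<phi> x) = inv \<phi> x" for u x
    using TFw[OF cp inf a ma om2 that] .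
  have TFa': "u x = dunit" if "cont_to_dinf u" "\<And>x. \<alpha> (u x) x = x" for u x
  proof -
    have om3: "open (id ` V)" if "open V" for V :: "'x set" using that by simp
    have "\<And>x. \<alpha> (u x) (id x) = id x" using that(2) by simp
    from TFw[OF cp inf a ma om3 that(1) this] show ?thesis .
  qed
  have coc: "c (dmul h g) x = dmul (c h (\<alpha> g x)) (c g x)" for h g x
  proof -
    let ?w = "\<lambda>x. dmul (c h (\<alpha> g x)) (c g x)"
    let ?u = "\<lambda>x. dmul (dinv (?w x)) (c (dmul h g) x)"
    have w: "cont_to_dinf ?w" using cont_mul[OF cont_to_dinf_comp[OF contA ccg] ccg] .
    have cu: "cont_to_dinf ?u" using cont_mul[OF cont_post[OF w, of dinv] ccg] .
    have "\<beta> (?u x) (\<phi> x) = \<phi> x" for x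
    proof -
      have "\<beta> (c (dmul h g) x) (\<phi> x) = \<phi> (\<alpha> (dmul h g) x)" by (rule ceq[symmetric])
      also have "\<dots> = \<phi> (\<alpha> h (\<alpha> g x))" by (simp only: actA)
      also have "\<dots> = \<beta> (c h (\<alpha> g x)) (\<beta> (c g x) (\<phi> x))" by (simp only: ceq)
      also have "\<dots> = \<beta> (?w x) (\<phi> x)" by (simp only: actB)
      finally have e: "\<beta> (c (dmul h g) x) (\<phi> x) = \<beta> (?w x) (\<phi> x)" .
      have "\<beta> (?u x) (\<phi> x) = \<beta> (dinv (?w x)) (\<beta> (c (dmul h g) x) (\<phi> x))" by (rule actB)
      also have "\<dots> = \<phi> x" unfolding e by (rule act_inv(2)[OF b])
      finally show ?thesis .
    qed
    hence "?u x = dunit" using TFb[OF cu] by blast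
    thus ?thesis by (rule inv_eq)
  qed
  have coc': "c' (dmul h g) y = dmul (c' h (\<beta> g y)) (c' g y)" for h g y
  proof -
    let ?w = "\<lambda>y. dmul (c' h (\<beta> g y)) (c' g y)"
    let ?u = "\<lambda>y. dmul (dinv (?w y)) (c' (dmul h g) y)"
    have w: "cont_to_dinf ?w" using cont_mul[OF cont_to_dinf_comp[OF contB ccg'] ccg'] .
    have cu: "cont_to_dinf ?u" using cont_mul[OF cont_post[OF w, of dinv] ccg'] .
    have "\<alpha> (?u y) (inv \<phi> y) = inv \<phi> y" for y
    proof -
      have "\<alpha> (c' (dmul h g) y) (inv \<phi> y) = inv \<phi> (\<beta> (dmul h g) y)" by (rule ceq'[symmetric])
      also have "\<dots> = inv \<phi> (\<beta> h (\<beta> g y))" by (simp only: actB)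
      also have "\<dots> = \<alpha> (c' h (\<beta> g y)) (\<alpha> (c' g y) (inv \<phi> y))" by (simp only: ceq')
      also have "\<dots> = \<alpha> (?w y) (inv \<phi> y)" by (simp only: actA)
      finally have e: "\<alpha> (c' (dmul h g) y) (inv \<phi> y) = \<alpha> (?w y) (inv \<phi> y)" .
      have "\<alpha> (?u y) (inv \<phi> y) = \<alpha> (dinv (?w y)) (\<alpha> (c' (dmul h g) y) (inv \<phi> y))" by (rule actA)
      also have "\<dots> = inv \<phi> y" unfolding e by (rule act_inv(2)[OF a])
      finally show ?thesis .
    qed
    hence "?u y = dunit" using TFa[OF cu] by blast
    thus ?thesis by (rule inv_eq)
  qed
  have c1: "c dunit x = dunit" for x
  proof -
    have "\<alpha> dunit x = x" using a unfolding cont_action_def by blast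
    hence "dmul (c dunit x) (c dunit x) = c dunit x" using coc[of dunit dunit x] by simp
    thus ?thesis by (rule idem_unit)
  qed
  have inv1: "c (c' h (\<phi> x)) x = h" for h x
  proof -
    let ?u = "\<lambda>x. dmul (dinv h) (c (c' h (\<phi> x)) x)"
    have v: "cont_to_dinf (\<lambda>x. c' h (\<phi> x))" using cont_to_dinf_comp[OF cphi ccg'] .
    have cu: "cont_to_dinf ?u"
      using cont_post[OF cont_to_dinf_dep[of c, OF ccg v], of "dmul (dinv h)"] .
    have "\<beta> (?u x) (\<phi> x) = \<phi> x" for x
    proof -
      have "\<beta> (c (c' h (\<phi> x)) x) (\<phi> x) = \<phi> (\<alpha> (c' h (\<phi> x)) x)" by (rule ceq[symmetric])
      also have "\<dots> = \<phi> (\<alpha> (c' h (\<phi> x)) (inv \<phi> (\<phi> x)))" by (simp only: ip)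
      also have "\<dots> = \<phi> (inv \<phi> (\<beta> h (\<phi> x)))" by (simp only: ceq')
      also have "\<dots> = \<beta> h (\<phi> x)" by (rule pi)
      finally have e: "\<beta> (c (c' h (\<phi> x)) x) (\<phi> x) = \<beta> h (\<phi> x)" .
      have "\<beta> (?u x) (\<phi> x) = \<beta> (dinv h) (\<beta> (c (c' h (\<phi> x)) x) (\<phi> x))" by (rule actB)
      also have "\<dots> = \<phi> x" unfolding e by (rule act_inv(2)[OF b])
      finally show ?thesis .
    qed
    hence "?u x = dunit" using TFb[OF cu] by blast
    thus ?thesis by (rule inv_eq)
  qed
  have inv2: "c' (c g x) (\<phi> x) = g" for g x
  proof -
    let ?u = "\<lambda>y. dmul (dinv g) (c' (c g (inv \<phi> y)) y)"
    have v: "cont_to_dinf (\<lambda>y. c g (inv \<phi> y))" using cont_to_dinf_comp[OF ciphi ccg] .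
    have cu: "cont_to_dinf ?u"
      using cont_post[OF cont_to_dinf_dep[of c', OF ccg' v], of "dmul (dinv g)"] .
    have "\<alpha> (?u y) (inv \<phi> y) = inv \<phi> y" for y
    proof -
      have "\<alpha> (c' (c g (inv \<phi> y)) y) (inv \<phi> y) = inv \<phi> (\<beta> (c g (inv \<phi> y)) y)"
        by (rule ceq'[symmetric])
      also have "\<dots> = inv \<phi> (\<beta> (c g (inv \<phi> y)) (\<phi> (inv \<phi> y)))" by (simp only: pi)
      also have "\<dots> = inv \<phi> (\<phi> (\<alpha> g (inv \<phi> y)))" by (simp only: ceq)
      also have "\<dots> = \<alpha> g (inv \<phi> y)" by (rule ip)
      finally have e: "\<alpha> (c' (c g (inv \<phi> y)) y) (inv \<phi> y) = \<alpha> g (inv \<phi> y)" .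
      have "\<alpha> (?u y) (inv \<phi> y) = \<alpha> (dinv g) (\<alpha> (c' (c g (inv \<phi> y)) y) (inv \<phi> y))" by (rule actA)
      also have "\<dots> = inv \<phi> y" unfolding e by (rule act_inv(2)[OF a])
      finally show ?thesis .
    qed
    hence "?u (\<phi> x) = dunit" using TFa[OF cu] by blast
    hence "c' (c g (inv \<phi> (\<phi> x))) (\<phi> x) = g" by (rule inv_eq)
    thus ?thesis by (simp only: ip)
  qed
  define P where "P = (\<lambda>x j. iota (c (gam j) x))"
  define Qi where "Qi = (\<lambda>x j. iota (c' (gam j) (\<phi> x)))"
  obtain M where M0: "M \<ge> 0" and sM: "\<forall>y j. \<bar>iota (c (gam (j+1)) y) - iota (c (gam j) y)\<bar> \<le> M"
    using step_bound[OF cp cc coc] by blast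
  obtain M1 where sM1: "\<forall>y j. \<bar>iota (c' (gam (j+1)) y) - iota (c' (gam j) y)\<bar> \<le> M1"
    using step_bound[OF cp cc' coc'] by blast
  define M' where "M' = max 1 M1"
  define K where "K = M * M'"
  have K0: "K \<ge> 0" unfolding K_def M'_def using M0 by simp
  have PQ: "P x (Qi x j) = j" for x j unfolding P_def Qi_def using inv1 by simp
  have QP: "Qi x (P x j) = j" for x j unfolding P_def Qi_def using inv2 by simp
  have P0: "P x 0 = 0" for x unfolding P_def gam0 c1 by (simp add: dunit_def)
  have dich: "(\<forall>j > K. 0 < P x j) \<and> (\<forall>j < -K. P x j < 0) \<or> (\<forall>j > K. P x j < 0) \<and> (\<forall>j < -K. 0 < P x j)"
    for x
  proof -
    have s1: "\<forall>j. \<bar>P x (j+1) - P x j\<bar> \<le> M" using sM unfolding P_def by blast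
    have s2: "\<forall>j. \<bar>Qi x (j+1) - Qi x j\<bar> \<le> M'" using sM1 unfolding Qi_def M'_def
      by (meson max.coboundedI2)
    have m': "M' \<ge> 1" unfolding M'_def by simp
    show ?thesis using dichotomy[of "P x" M "Qi x" M', OF P0 s1 s2 _ _ M0 m'] QP PQ
      unfolding K_def by blast
  qed
  have bijP: "bij (P x)" for x
    by (rule bij_betw_byWitness[where f'="Qi x"]) (simp_all add: QP PQ)
  define L' where "L' = (\<lambda>x. Lw K (P x))"
  define f where "f = (\<lambda>x. Fw K (P x))"
  define Qn where "Qn = (\<lambda>x. lam (L' x) \<circ> P x)"
  have nrm: "pos_or (Qn x) \<and> flux (Qn x) = f x \<and> f x \<in> {0,1}" for x
    using normalize[OF bijP dich] unfolding Qn_def L'_def f_def .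
  have bQn: "bij (Qn x)" for x unfolding Qn_def using bijP bij_lam by (blast intro: bij_comp)
  have Ptrans: "P (\<alpha> g x) = lam (c g x) \<circ> P x \<circ> lam (dinv g)" for g x
  proof (rule ext)
    fix j
    have e1: "c (gam j) (\<alpha> g x) = dmul (c (dmul (gam j) g) x) (dinv (c g x))"
      using coc[of "gam j" g x] by (rule solve_l)
    have e2: "gam (lam (dinv g) j) = dmul (gam j) g"
      using gam_iota[of "dmul (gam j) g"] unfolding iota_mul by simp
    show "P (\<alpha> g x) j = (lam (c g x) \<circ> P x \<circ> lam (dinv g)) j"
      unfolding P_def by (simp add: e1 e2 iota_mul_inv)
  qed
  have core_app: "dmul (L' (\<alpha> g x)) (dmul (c g x) (dinv (L' x))) = phik (- f x) g \<and> f (\<alpha> g x) = f x"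
    for g x
  proof -
    let ?k = "dmul (L' (\<alpha> g x)) (dmul (c g x) (dinv (L' x)))"
    have "Qn (\<alpha> g x) = lam ?k \<circ> Qn x \<circ> lam (dinv g)"
      unfolding Qn_def Ptrans by (simp add: lam_hom comp_assoc lam_inv_l')
    from core[OF bQn nrm[THEN conjunct1] nrm[THEN conjunct1] _ _ this]
    show ?thesis using nrm by auto
  qed
  have loc: "\<exists>U. open U \<and> x0 \<in> U \<and> (\<forall>x\<in>U. L' x = L' x0 \<and> f x = f x0)" for x0
  proof -
    define U where "U = (\<Inter>j\<in>{-K..K+1}. {x. c (gam j) x = gam (P x0 j)})"
    have "open U" unfolding U_def
      by (rule open_INT) (use ccg in \<open>auto simp: cont_to_dinf_def\<close>)
    moreover have "x0 \<in> U" unfolding U_def P_def by simp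
    moreover have "L' x = L' x0 \<and> f x = f x0" if "x \<in> U" for x
    proof -
      have "\<forall>j\<in>{-K..K+1}. P x j = P x0 j" using that unfolding U_def
        by (simp add: P_def)
      thus ?thesis using window[OF _ K0] unfolding L'_def f_def by blast
    qed
    ultimately show ?thesis by blast
  qed
  have contL: "cont_to_dinf L'"
    unfolding cont_to_dinf_def
  proof
    fix h
    show "open {x. L' x = h}"
      unfolding open_subopen[of "{x. L' x = h}"]
    proof
      fix x0 assume x0: "x0 \<in> {x. L' x = h}"
      obtain U where U: "open U" "x0 \<in> U" "\<forall>x\<in>U. L' x = L' x0 \<and> f x = f x0" using loc[of x0] by blast
      have "U \<subseteq> {x. L' x = h}" using U(3) x0 by auto
      thus "\<exists>T. open T \<and> x0 \<in> T \<and> T \<subseteq> {x. L' x = h}" using U(1,2) by blast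
    qed
  qed
  have fc: "f y = f z" for y z
  proof -
    let ?S = "{x. f x = f y}"
    have "open (- ?S)"
      unfolding open_subopen[of "- ?S"]
    proof
      fix x0 assume x0: "x0 \<in> - ?S"
      obtain U where U: "open U" "x0 \<in> U" "\<forall>x\<in>U. L' x = L' x0 \<and> f x = f x0" using loc[of x0] by blast
      have "U \<subseteq> - ?S" using U(3) x0 by auto
      thus "\<exists>T. open T \<and> x0 \<in> T \<and> T \<subseteq> - ?S" using U(1,2) by blast
    qed
    hence cl: "closed ?S" by (simp add: closed_def)
    have "{\<alpha> g y | g. g \<in> UNIV} \<subseteq> ?S" using core_app by auto
    hence "closure {\<alpha> g y | g. g \<in> UNIV} \<subseteq> ?S" using cl by (rule closure_minimal)
    moreover have "closure {\<alpha> g y | g. g \<in> UNIV} = UNIV" using ma unfolding minimal_on_def by (rule spec)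
    ultimately have "z \<in> ?S" by auto
    thus ?thesis by simp
  qed
  show ?thesis
  proof (intro exI conjI allI)
    show "cont_to_dinf L'" by (rule contL)
  next
    fix g x
    have k: "dmul (L' (\<alpha> g x)) (dmul (c g x) (dinv (L' x))) = phik (- f undefined) g"
      using core_app[of g x] fc[of x undefined] by simp
    show "c g x = dmul (dinv (L' (\<alpha> g x))) (dmul (phik (- f undefined) g) (L' x))"
      unfolding k[symmetric] grp ..
  qed
qed

end
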